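(* Let $\varphi$ be a rule and $\mathbb{S}$ a pick-an-object mechanism that sequentializes $\varphi$, and let $h^A\in H^A_{\mathbb{S}}$ be any collective history of $\mathbb{S}$. Let $P\in\mathcal{P}$ be any preference profile, $\sigma^P$ the profile of straightforward strategies with respect to $P$, $a^*$ any agent, and $\sigma'$ any other strategy for $a^*$. Then there exist a set $I\subseteq O$, an ordering $\gamma$ of the elements of $I$, a preference $P^*\in\mathbb{P}$, and preferences $P'_{-a^*}$ of the agents other than $a^*$ such that $$\mathcal{O}_{a^*}|_{h^A}(\sigma^P_{a^*},\sigma^P_{-a^*})=\varphi_{a^*}\big(\gamma\oplus P_{a^*}|_{O\setminus I},\,P'_{-a^*}\big)$$ and $$\mathcal{O}_{a^*}|_{h^A}(\sigma',\sigma^P_{-a^*})=\varphi_{a^*}\big(\gamma\oplus P^*|_{O\setminus I},\,P'_{-a^*}\big).$$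
   Context: Let $A=\{a_1,\dots,a_n\}$ be a finite set of agents and $O=\{o_1,\dots,o_m\}\cup\{\emptyset\}$ a finite set of object types ($\emptyset$ the null object). Each agent has a strict preference over $O$; $\mathbb{P}$ is the set of strict preferences, $\mathcal{P}=\mathbb{P}^n$ the set of profiles. An allocation is $\mu:A\to O$; a rule $\varphi$ maps profiles to allocations, $\varphi_a(P)=\varphi(P)(a)$. For a preference $Q$ and a set $J\subseteq O$, $Q|_J$ is the ordering $Q$ restricted to $J$; for an ordering $\gamma$ of $I\subseteq O$, $\gamma\oplus Q|_{O\setminus I}$ is the preference ranking the elements of $I$ first in the order $\gamma$, followed by the elements of $O\setminus I$ in the order given by $Q$. PAO mechanisms: a choice history is a finite (possibly empty) sequence $((\Omega_1,\omega_1),\dots,(\Omega_k,\omega_k))$, $\Omega_j\subseteq O$, $\omega_j\in\Omega_j$, with last choice $\omega_k$. A collective history is an $n$-tuple of choice histories ($h^{A-\emptyset}$: all empty). A menu function $\mathbb{S}$ maps collective histories to $n$-tuples of subsets of $O$, with non-empty initial menus and, afterwards, agent $i$'s menu a subset of her last menu minus her last choice. The PAO mechanism $\mathbb{S}$: in period 1 every agent chooses from her initial menu; in each later period, given the current collective history $h^A$, if all menus in $\mathbb{S}(h^A)$ are empty the procedure stops and each agent receives her last choice; otherwise agents with non-empty menus choose an element; (menu, choice) is appended to each chooser's history. $H^A_{\mathbb{S}}$ is the set of collective histories that can arise. A strategy for agent $a$ maps each pair (own past history, current menu $\Omega$) to an element of $\Omega$. The straightforward strategy w.r.t. $P_a$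 always chooses the $P_a$-best element of the menu. $\mathbb{S}$ sequentializes $\varphi$ if straightforward play w.r.t. any $P$ yields $\varphi(P)$. For $h^A\in H^A_{\mathbb{S}}$ and a strategy profile $\sigma$, $\mathcal{O}_a|_{h^A}(\sigma)$ denotes agent $a$'s assignment when $\mathbb{S}$ is run starting from $h^A$ with agents following $\sigma$. *)

theory Defs
  imports Main
begin

text \<open>Objects: a finite type 'o (its elements are the object types, including the null object). A strict preference over O is represented as a list of all objects
without repetition, best first.\<close>

type_synonym 'o pref = "'o list"
type_synonym 'o choice_hist = "('o set \<times> 'o) list"
type_synonym ('ag, 'o) coll_hist = "'ag \<Rightarrow> 'o choice_hist"
type_synonym ('ag, 'o) menu_fun = "('ag, 'o) coll_hist \<Rightarrow> 'ag \<Rightarrow> 'o set"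
type_synonym 'o strategy = "'o choice_hist \<Rightarrow> 'o set \<Rightarrow> 'o"

definition is_pref :: "'o pref \<Rightarrow> bool" where
  "is_pref Q \<longleftrightarrow> distinct Q \<and> set Q = UNIV"

definition is_profile :: "('ag \<Rightarrow> 'o pref) \<Rightarrow> bool" where
  "is_profile P \<longleftrightarrow> (\<forall>a. is_pref (P a))"

definition restr :: "'o pref \<Rightarrow> 'o set \<Rightarrow> 'o list" where
  "restr Q J = filter (\<lambda>x. x \<in> J) Q"

definition is_ordering_of :: "'o list \<Rightarrow> 'o set \<Rightarrow> bool" where
  "is_ordering_of \<gamma> I \<longleftrightarrow> distinct \<gamma> \<and> set \<gamma> = I"

definition oplus_restr :: "'o list \<Rightarrow> 'o pref \<Rightarrow> 'o set \<Rightarrow> 'o pref" where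
  "oplus_restr \<gamma> Q I = \<gamma> @ restr Q (UNIV - I)"

definition empty_hist :: "('ag, 'o) coll_hist" where
  "empty_hist = (\<lambda>_. [])"

definition menu_function :: "('ag, 'o) menu_fun \<Rightarrow> bool" where
  "menu_function S \<longleftrightarrow>
     (\<forall>a. S empty_hist a \<noteq> {}) \<and>
     (\<forall>h a. h a \<noteq> [] \<longrightarrow> S h a \<subseteq> fst (last (h a)) - {snd (last (h a))})"

definition all_menus_empty :: "('ag, 'o) menu_fun \<Rightarrow> ('ag, 'o) coll_hist \<Rightarrow> bool" where
  "all_menus_empty S h \<longleftrightarrow> (\<forall>a. S h a = {})"

inductive_set histories :: "('ag, 'o) menu_fun \<Rightarrow> ('ag, 'o) coll_hist set"
  for S :: "('ag, 'o) menu_fun" where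
  init: "empty_hist \<in> histories S"
| ext: "\<lbrakk> h \<in> histories S; \<not> all_menus_empty S h;
          \<forall>a. S h a \<noteq> {} \<longrightarrow> c a \<in> S h a \<rbrakk>
        \<Longrightarrow> (\<lambda>a. if S h a = {} then h a else h a @ [(S h a, c a)]) \<in> histories S"

definition valid_strategy :: "'o strategy \<Rightarrow> bool" where
  "valid_strategy s \<longleftrightarrow> (\<forall>hh \<Omega>. \<Omega> \<noteq> {} \<longrightarrow> s hh \<Omega> \<in> \<Omega>)"

definition straightforward :: "'o pref \<Rightarrow> 'o strategy" where
  "straightforward Q hh \<Omega> = hd (filter (\<lambda>x. x \<in> \<Omega>) Q)"

definition step :: "('ag, 'o) menu_fun \<Rightarrow> ('ag \<Rightarrow> 'o strategy) \<Rightarrow> ('ag, 'o) coll_hist \<Rightarrow> ('ag, 'o) coll_hist" where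
  "step S \<sigma> h = (\<lambda>a. if S h a = {} then h a else h a @ [(S h a, \<sigma> a (h a) (S h a))])"

definition final_hist :: "('ag, 'o) menu_fun \<Rightarrow> ('ag \<Rightarrow> 'o strategy) \<Rightarrow> ('ag, 'o) coll_hist \<Rightarrow> ('ag, 'o) coll_hist" where
  "final_hist S \<sigma> h = (step S \<sigma> ^^ (LEAST n. all_menus_empty S ((step S \<sigma> ^^ n) h))) h"

definition outcome :: "('ag, 'o) menu_fun \<Rightarrow> ('ag \<Rightarrow> 'o strategy) \<Rightarrow> ('ag, 'o) coll_hist \<Rightarrow> 'ag \<Rightarrow> 'o" where
  "outcome S \<sigma> h a = snd (last (final_hist S \<sigma> h a))"

definition sequentializes :: "('ag, 'o) menu_fun \<Rightarrow> (('ag \<Rightarrow> 'o pref) \<Rightarrow> 'ag \<Rightarrow> 'o) \<Rightarrow> bool" where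
  "sequentializes S \<phi> \<longleftrightarrow>
     (\<forall>P. is_profile P \<longrightarrow> outcome S (\<lambda>a. straightforward (P a)) empty_hist = \<phi> P)"

end

theory Submission
  imports Defs
begin

definition chain :: "('o set \<times> 'o) list \<Rightarrow> bool" where
  "chain l \<longleftrightarrow> (\<forall>j<length l. snd (l!j) \<in> fst (l!j)) \<and>
     (\<forall>j. Suc j < length l \<longrightarrow> fst (l!Suc j) \<subseteq> fst (l!j) - {snd (l!j)})"

lemma chain_mono:
  assumes "chain l" "i \<le> j" "j < length l"
  shows "fst (l!j) \<subseteq> fst (l!i)"
  using assms(2,3)
proof (induction j)
  case 0 then show ?case by simp
next
  case (Suc j)
  show ?case
  proof (cases "i = Suc j")
    case True then show ?thesis by simp
  next
    case False
    then have "i \<le> j" using Suc by simp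
    then have "fst (l!j) \<subseteq> fst (l!i)" using Suc by simp
    moreover have "fst (l!Suc j) \<subseteq> fst (l!j)" using assms(1) Suc.prems unfolding chain_def by blast
    ultimately show ?thesis by blast
  qed
qed

lemma chain_notin:
  assumes "chain l" "i < j" "j < length l"
  shows "snd (l!i) \<notin> fst (l!j)"
proof -
  have "fst (l!j) \<subseteq> fst (l!Suc i)" using chain_mono[OF assms(1)] assms by simp
  moreover have "fst (l!Suc i) \<subseteq> fst (l!i) - {snd (l!i)}" using assms unfolding chain_def by simp
  ultimately show ?thesis by blast
qed

lemma chain_in: "chain l \<Longrightarrow> j < length l \<Longrightarrow> snd (l!j) \<in> fst (l!j)"
  unfolding chain_def by blast

lemma chain_take: "chain l \<Longrightarrow> chain (take k l)"
  unfolding chain_def by auto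

lemma chain_drop: "chain l \<Longrightarrow> chain (drop k l)"
  unfolding chain_def by (auto simp: add.commute[of k])

lemma chain_distinct: "chain l \<Longrightarrow> distinct (map snd l)"
  unfolding distinct_conv_nth
  by (metis chain_in chain_notin length_map linorder_neqE_nat nth_map)

lemma filter_prefix_empty:
  assumes "chain l" "j < length l" "k \<le> j"
  shows "filter (\<lambda>x. x \<in> fst (l!j)) (map snd (take k l)) = []"
proof -
  have "\<forall>x\<in>set (map snd (take k l)). x \<notin> fst (l!j)"
  proof
    fix x assume "x \<in> set (map snd (take k l))"
    then obtain i where "i < length (take k l)" "x = snd (take k l ! i)"
      by (auto simp: in_set_conv_nth)
    then have "i < k" "x = snd (l!i)" by auto
    then show "x \<notin> fst (l!j)" using chain_notin[OF assms(1) _ assms(2)] assms(3) by simp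
  qed
  then show ?thesis by (simp add: filter_empty_conv)
qed

lemma chain_hd:
  assumes "chain l" "j < length l"
  shows "hd (filter (\<lambda>x. x \<in> fst (l!j)) (map snd l @ M)) = snd (l!j)"
proof -
  have l: "l = take j l @ l!j # drop (Suc j) l" using assms(2) by (simp add: id_take_nth_drop)
  have "map snd l @ M = map snd (take j l) @ snd (l!j) # (map snd (drop (Suc j) l) @ M)"
    by (subst l) simp
  moreover have "filter (\<lambda>x. x \<in> fst (l!j)) (map snd (take j l)) = []"
    using filter_prefix_empty[OF assms] by simp
  ultimately show ?thesis using chain_in[OF assms] by simp
qed

lemma sim_cond:
  assumes "chain l" "k \<le> length l" "xs = map snd (take k l)"
    and hQ: "\<And>j. k \<le> j \<Longrightarrow> j < length l \<Longrightarrow> hd (filter (\<lambda>x. x \<in> fst (l!j)) Q) = snd (l!j)"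
    and "j < length l"
  shows "straightforward (xs @ restr Q (UNIV - set xs)) (take j l) (fst (l!j)) = snd (l!j)"
proof (cases "j < k")
  case True
  have c: "chain (take k l)" using chain_take[OF assms(1)] .
  have "j < length (take k l)" using True assms by simp
  from chain_hd[OF c this, of "restr Q (UNIV - set xs)"] True assms(3)
  show ?thesis by (simp add: straightforward_def)
next
  case False
  have e: "filter (\<lambda>x. x \<in> fst (l!j)) xs = []"
    using filter_prefix_empty[OF assms(1) assms(5)] False assms(3) by simp
  have "filter (\<lambda>x. x \<in> fst (l!j)) (restr Q (UNIV - set xs)) = filter (\<lambda>x. x \<in> fst (l!j)) Q"
    unfolding restr_def filter_filter
  proof (rule filter_cong)
    fix x assume "x \<in> set Q"
    have "x \<in> fst (l!j) \<Longrightarrow> x \<notin> set xs"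
      using e by (metis (mono_tags, lifting) filter_empty_conv)
    then show "(x \<in> UNIV - set xs \<and> x \<in> fst (l ! j)) = (x \<in> fst (l ! j))" by blast
  qed simp
  then show ?thesis using e hQ[of j] False assms(5) by (simp add: straightforward_def)
qed

lemma pref_ext: "distinct xs \<Longrightarrow> is_pref Q \<Longrightarrow> is_pref (xs @ restr Q (UNIV - set xs))"
  unfolding is_pref_def restr_def by auto

lemma sf_valid: "is_pref Q \<Longrightarrow> \<Omega> \<noteq> {} \<Longrightarrow> straightforward Q hh \<Omega> \<in> \<Omega>"
proof -
  assume "is_pref Q" "\<Omega> \<noteq> {}"
  then have "filter (\<lambda>x. x \<in> \<Omega>) Q \<noteq> []" unfolding is_pref_def by (auto simp: filter_empty_conv)
  then have "hd (filter (\<lambda>x. x \<in> \<Omega>) Q) \<in> set (filter (\<lambda>x. x \<in> \<Omega>) Q)" by (rule hd_in_set)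
  then show ?thesis unfolding straightforward_def by (simp only: set_filter) blast
qed

lemma step_hist:
  assumes "g \<in> histories S" "\<And>b. S g b \<noteq> {} \<Longrightarrow> \<sigma> b (g b) (S g b) \<in> S g b"
  shows "step S \<sigma> g \<in> histories S"
proof (cases "all_menus_empty S g")
  case True
  then have "step S \<sigma> g = g" unfolding step_def all_menus_empty_def by auto
  then show ?thesis using assms by simp
next
  case False
  have "(\<lambda>a. if S g a = {} then g a else g a @ [(S g a, (\<lambda>a. \<sigma> a (g a) (S g a)) a)]) \<in> histories S"
    by (rule histories.ext) (use assms False in auto)
  then show ?thesis unfolding step_def by simp
qed


lemma hist_chain:
  assumes ms: "menu_function S" and "g \<in> histories S"
  shows "chain (g b)"
  using assms(2)
proof (induction g arbitrary: b rule: histories.induct)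
  case init then show ?case by (simp add: empty_hist_def chain_def)
next
  case (ext h c)
  show ?case
  proof (cases "S h b = {}")
    case True then show ?thesis using ext.IH by simp
  next
    case False
    let ?l = "h b"
    have cl: "chain ?l" by (rule ext.IH)
    have cin: "c b \<in> S h b" using ext.hyps False by blast
    have sub: "?l \<noteq> [] \<Longrightarrow> S h b \<subseteq> fst (last ?l) - {snd (last ?l)}"
      using ms unfolding menu_function_def by blast
    have "chain (?l @ [(S h b, c b)])"
      unfolding chain_def
    proof (intro conjI allI impI)
      fix j assume "j < length (?l @ [(S h b, c b)])"
      then show "snd ((?l @ [(S h b, c b)]) ! j) \<in> fst ((?l @ [(S h b, c b)]) ! j)"
        using cl cin by (cases "j < length ?l") (auto simp: nth_append chain_def)
    next
      fix j assume j: "Suc j < length (?l @ [(S h b, c b)])"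
      show "fst ((?l @ [(S h b, c b)]) ! Suc j) \<subseteq> fst ((?l @ [(S h b, c b)]) ! j) - {snd ((?l @ [(S h b, c b)]) ! j)}"
      proof (cases "Suc j < length ?l")
        case True then show ?thesis using cl by (simp add: nth_append chain_def)
      next
        case False
        then have "Suc j = length ?l" using j by simp
        moreover then have "?l \<noteq> []" "last ?l = ?l ! j" by (auto simp: last_conv_nth)
          (metis diff_Suc_1 last_conv_nth list.size(3) nat.distinct(1))
        ultimately show ?thesis using sub by (simp add: nth_append)
      qed
    qed
    then show ?thesis using False by simp
  qed
qed

definition AE where "AE S h = all_menus_empty S h"

definition pot :: "'o::finite choice_hist \<Rightarrow> nat" where
  "pot l = (if l = [] then card (UNIV::'o set) else card (fst (last l) - {snd (last l)}))"

lemma pot_step: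
  assumes ms: "menu_function S" and v: "\<And>b. S g b \<noteq> {} \<Longrightarrow> \<sigma> b (g b) (S g b) \<in> S g b"
  shows "pot (step S \<sigma> g b) \<le> pot (g b)" "S g b \<noteq> {} \<Longrightarrow> pot (step S \<sigma> g b) < pot (g b)"
proof -
  have lt: "pot (step S \<sigma> g b) < pot (g b)" if ne: "S g b \<noteq> {}"
  proof -
    have "pot (step S \<sigma> g b) = card (S g b - {\<sigma> b (g b) (S g b)})"
      using ne by (simp add: step_def pot_def)
    also have "\<dots> < card (S g b)"
      using v[OF ne] by (metis card_Diff1_less finite)
    also have "card (S g b) \<le> pot (g b)"
    proof (cases "g b = []")
      case True then show ?thesis by (simp add: pot_def card_mono)
    next
      case False
      then have "S g b \<subseteq> fst (last (g b)) - {snd (last (g b))}"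
        using ms unfolding menu_function_def by blast
      then show ?thesis using False by (simp add: pot_def card_mono)
    qed
    finally show ?thesis .
  qed
  show "pot (step S \<sigma> g b) \<le> pot (g b)"
    using lt by (cases "S g b = {}") (auto simp: step_def)
  show "S g b \<noteq> {} \<Longrightarrow> pot (step S \<sigma> g b) < pot (g b)" by (rule lt)
qed

lemma terminates:
  fixes S :: "('ag::finite, 'o::finite) menu_fun"
  assumes ms: "menu_function S" and v: "\<And>b hh \<Omega>. \<Omega> \<noteq> {} \<Longrightarrow> \<sigma> b hh \<Omega> \<in> \<Omega>"
  shows "\<exists>m. all_menus_empty S ((step S \<sigma> ^^ m) g)"
proof (induction "\<Sum>b\<in>UNIV. pot (g b)" arbitrary: g rule: less_induct)
  case less
  show ?case
  proof (cases "all_menus_empty S g")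
    case True then show ?thesis by (metis funpow_0)
  next
    case False
    then obtain b0 where b0: "S g b0 \<noteq> {}" unfolding all_menus_empty_def by blast
    have v': "\<And>b. S g b \<noteq> {} \<Longrightarrow> \<sigma> b (g b) (S g b) \<in> S g b" using v by blast
    have "(\<Sum>b\<in>UNIV. pot (step S \<sigma> g b)) < (\<Sum>b\<in>UNIV. pot (g b))"
      by (rule sum_strict_mono_ex1) (use pot_step[where S=S and g=g and \<sigma>=\<sigma>, OF ms v'] b0 in auto)
    then obtain m where "all_menus_empty S ((step S \<sigma> ^^ m) (step S \<sigma> g))"
      using less by blast
    then have "all_menus_empty S ((step S \<sigma> ^^ Suc m) g)" by (simp add: funpow_Suc_right del: funpow.simps)
    then show ?thesis by blast
  qed
qed

lemma run_hist:
  assumes "g \<in> histories S" "\<And>b hh \<Omega>. \<Omega> \<noteq> {} \<Longrightarrow> \<sigma> b hh \<Omega> \<in> \<Omega>"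
  shows "(step S \<sigma> ^^ m) g \<in> histories S"
proof (induction m)
  case (Suc m) then show ?case using step_hist[of "(step S \<sigma> ^^ m) g" S \<sigma>] assms(2) by simp
qed (use assms in simp)

lemma step_app: "step S \<sigma> g b = (if S g b = {} then g b else g b @ [(S g b, \<sigma> b (g b) (S g b))])"
  by (simp add: step_def)

lemma run_inv:
  shows "\<exists>r. (step S \<sigma> ^^ m) g b = g b @ r" 
    "length (g b) \<le> j \<Longrightarrow> j < length ((step S \<sigma> ^^ m) g b) \<Longrightarrow>
       snd ((step S \<sigma> ^^ m) g b ! j) = \<sigma> b (take j ((step S \<sigma> ^^ m) g b)) (fst ((step S \<sigma> ^^ m) g b ! j))"
proof (induction m arbitrary: j)
  case 0 
  { case 1 show ?case by simp }
  { case 2 then show ?case by simp }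
next
  case (Suc m)
  define G where "G = (step S \<sigma> ^^ m) g"
  have e: "(step S \<sigma> ^^ Suc m) g b = (if S G b = {} then G b else G b @ [(S G b, \<sigma> b (G b) (S G b))])"
    unfolding G_def by (simp only: funpow.simps o_apply step_app)
  note IH1 = Suc.IH(1)[folded G_def] and IH2 = Suc.IH(2)[folded G_def]
  { case 1 show ?case using IH1 unfolding e by auto }
  { case 2
    show ?case
    proof (cases "S G b = {}")
      case True then show ?thesis using IH2[of j] 2 unfolding e by simp
    next
      case False
      show ?thesis
      proof (cases "j < length (G b)")
        case True then show ?thesis using IH2[of j] 2 False unfolding e by (simp add: nth_append)
      next
        case F2: False
        then have "j = length (G b)" using 2 False unfolding e by simp
        then show ?thesis using False unfolding e by (simp add: nth_append)
      qed
    qed }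
qed


lemma repro_path:
  assumes "g \<in> histories S"
    and "\<And>b j. j < length (g b) \<Longrightarrow> \<tau> b (take j (g b)) (fst (g b ! j)) = snd (g b ! j)"
  shows "\<exists>n. (\<forall>k<n. \<not> all_menus_empty S ((step S \<tau> ^^ k) empty_hist)) \<and> (step S \<tau> ^^ n) empty_hist = g"
  using assms
proof (induction g rule: histories.induct)
  case init
  show ?case by (rule exI[of _ 0]) simp
next
  case (ext h c)
  let ?h' = "\<lambda>a. if S h a = {} then h a else h a @ [(S h a, c a)]"
  have pre: "\<And>b j. j < length (h b) \<Longrightarrow> take j (?h' b) = take j (h b) \<and> ?h' b ! j = h b ! j"
    by (auto simp: nth_append)
  have "\<And>b j. j < length (h b) \<Longrightarrow> \<tau> b (take j (h b)) (fst (h b ! j)) = snd (h b ! j)"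
  proof -
    fix b j assume j: "j < length (h b)"
    have "j < length (?h' b)" using j by simp
    from ext.prems[OF this] pre[OF j] show "\<tau> b (take j (h b)) (fst (h b ! j)) = snd (h b ! j)" by simp
  qed
  then obtain n where n: "\<forall>k<n. \<not> all_menus_empty S ((step S \<tau> ^^ k) empty_hist)"
     "(step S \<tau> ^^ n) empty_hist = h" using ext.IH by blast
  have "step S \<tau> h = ?h'"
  proof
    fix b
    show "step S \<tau> h b = ?h' b"
    proof (cases "S h b = {}")
      case False
      have "length (h b) < length (?h' b)" using False by simp
      from ext.prems[OF this] False have "\<tau> b (h b) (S h b) = c b" by simp
      then show ?thesis by (simp add: step_app)
    qed (simp add: step_app)
  qed
  then have "(step S \<tau> ^^ Suc n) empty_hist = ?h'" using n(2) by simp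
  moreover have "\<forall>k<Suc n. \<not> all_menus_empty S ((step S \<tau> ^^ k) empty_hist)"
    using n ext.hyps(2) by (metis less_Suc_eq)
  ultimately show ?case by blast
qed

lemma final_eq:
  assumes "\<forall>k<n. \<not> all_menus_empty S ((step S \<tau> ^^ k) x)" "all_menus_empty S ((step S \<tau> ^^ n) x)"
  shows "final_hist S \<tau> x = (step S \<tau> ^^ n) x"
proof -
  have "(LEAST k. all_menus_empty S ((step S \<tau> ^^ k) x)) = n"
    by (rule Least_equality) (use assms in \<open>auto simp: not_less[symmetric]\<close>)
  then show ?thesis unfolding final_hist_def by simp
qed

lemma final_props:
  fixes S :: "('ag::finite, 'o::finite) menu_fun"
  assumes ms: "menu_function S" and v: "\<And>b hh \<Omega>. \<Omega> \<noteq> {} \<Longrightarrow> \<sigma> b hh \<Omega> \<in> \<Omega>"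
    and h: "h \<in> histories S"
  shows "final_hist S \<sigma> h \<in> histories S" "all_menus_empty S (final_hist S \<sigma> h)"
    "\<exists>m. final_hist S \<sigma> h = (step S \<sigma> ^^ m) h"
proof -
  have "\<exists>m. all_menus_empty S ((step S \<sigma> ^^ m) h)" by (rule terminates[OF ms]) (rule v)
  then obtain m where "all_menus_empty S ((step S \<sigma> ^^ m) h)" by blast
  then have "all_menus_empty S ((step S \<sigma> ^^ (LEAST m. all_menus_empty S ((step S \<sigma> ^^ m) h))) h)"
    by (rule LeastI)
  then show "all_menus_empty S (final_hist S \<sigma> h)" unfolding final_hist_def .
  show "\<exists>m. final_hist S \<sigma> h = (step S \<sigma> ^^ m) h" unfolding final_hist_def by blast
  then obtain m where m: "final_hist S \<sigma> h = (step S \<sigma> ^^ m) h" by blast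
  have "(step S \<sigma> ^^ m) h \<in> histories S" by (rule run_hist[OF h]) (rule v)
  then show "final_hist S \<sigma> h \<in> histories S" using m by simp
qed

lemma reproduce:
  assumes "F \<in> histories S" "all_menus_empty S F"
    and "\<And>b j. j < length (F b) \<Longrightarrow> \<tau> b (take j (F b)) (fst (F b ! j)) = snd (F b ! j)"
  shows "final_hist S \<tau> empty_hist = F"
proof -
  obtain n where n: "\<forall>k<n. \<not> all_menus_empty S ((step S \<tau> ^^ k) empty_hist)" "(step S \<tau> ^^ n) empty_hist = F"
    using repro_path[OF assms(1,3)] by blast
  show ?thesis using final_eq[OF n(1)] n(2) assms(2) by simp
qed


theorem lemma1:
  fixes S :: "('ag::finite, 'o::finite) menu_fun"
    and \<phi> :: "('ag \<Rightarrow> 'o pref) \<Rightarrow> 'ag \<Rightarrow> 'o"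
    and h :: "('ag, 'o) coll_hist"
    and P :: "'ag \<Rightarrow> 'o pref"
    and astar :: 'ag
    and \<sigma>' :: "'o strategy"
  assumes "menu_function S"
    and "sequentializes S \<phi>"
    and "h \<in> histories S"
    and "is_profile P"
    and "valid_strategy \<sigma>'"
  shows "\<exists>I \<gamma> Pstar P'.
           is_ordering_of \<gamma> I \<and> is_pref Pstar \<and> (\<forall>b. b \<noteq> astar \<longrightarrow> is_pref (P' b)) \<and>
           outcome S (\<lambda>a. straightforward (P a)) h astar
             = \<phi> (P'(astar := oplus_restr \<gamma> (P astar) I)) astar \<and>
           outcome S ((\<lambda>a. straightforward (P a))(astar := \<sigma>')) h astar
             = \<phi> (P'(astar := oplus_restr \<gamma> Pstar I)) astar"
proof -
  note ms = assms(1) and hh = assms(3)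
  define \<sigma>1 where "\<sigma>1 = (\<lambda>a. straightforward (P a))"
  define \<sigma>2 where "\<sigma>2 = \<sigma>1(astar := \<sigma>')"
  have pP: "\<And>b. is_pref (P b)" using assms(4) unfolding is_profile_def by blast
  have v1: "\<And>b hh \<Omega>. \<Omega> \<noteq> {} \<Longrightarrow> \<sigma>1 b hh \<Omega> \<in> \<Omega>"
    unfolding \<sigma>1_def using sf_valid[OF pP] by blast
  have v2: "\<And>b hh \<Omega>. \<Omega> \<noteq> {} \<Longrightarrow> \<sigma>2 b hh \<Omega> \<in> \<Omega>"
    unfolding \<sigma>2_def using v1 assms(5) unfolding valid_strategy_def by auto
  define F1 where "F1 = final_hist S \<sigma>1 h"
  define F2 where "F2 = final_hist S \<sigma>2 h"
  have F1h: "F1 \<in> histories S" "all_menus_empty S F1" "\<exists>m. F1 = (step S \<sigma>1 ^^ m) h"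
    unfolding F1_def using final_props[where S=S and \<sigma>=\<sigma>1 and h=h, OF ms v1 hh] by auto
  have F2h: "F2 \<in> histories S" "all_menus_empty S F2" "\<exists>m. F2 = (step S \<sigma>2 ^^ m) h"
    unfolding F2_def using final_props[where S=S and \<sigma>=\<sigma>2 and h=h, OF ms v2 hh] by auto
  obtain m1 where m1: "F1 = (step S \<sigma>1 ^^ m1) h" using F1h(3) by blast
  obtain m2 where m2: "F2 = (step S \<sigma>2 ^^ m2) h" using F2h(3) by blast
  have F1pre: "\<And>b. take (length (h b)) (F1 b) = h b" "\<And>b. length (h b) \<le> length (F1 b)"
    using run_inv(1)[where S=S and \<sigma>=\<sigma>1 and m=m1 and g=h] unfolding m1[symmetric] by (metis append_eq_conv_conj, metis le_add1 length_append)
  have F2pre: "\<And>b. take (length (h b)) (F2 b) = h b" "\<And>b. length (h b) \<le> length (F2 b)"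
    using run_inv(1)[where S=S and \<sigma>=\<sigma>2 and m=m2 and g=h] unfolding m2[symmetric] by (metis append_eq_conv_conj, metis le_add1 length_append)
  have F1ch: "\<And>b j. length (h b) \<le> j \<Longrightarrow> j < length (F1 b) \<Longrightarrow>
       snd (F1 b ! j) = \<sigma>1 b (take j (F1 b)) (fst (F1 b ! j))"
    unfolding m1 by (rule run_inv(2))
  have F2ch: "\<And>b j. length (h b) \<le> j \<Longrightarrow> j < length (F2 b) \<Longrightarrow>
       snd (F2 b ! j) = \<sigma>2 b (take j (F2 b)) (fst (F2 b ! j))"
    unfolding m2 by (rule run_inv(2))
  have c1: "\<And>b. chain (F1 b)" using hist_chain[OF ms F1h(1)] .
  have c2: "\<And>b. chain (F2 b)" using hist_chain[OF ms F2h(1)] .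
  have ch: "\<And>b. chain (h b)" using hist_chain[OF ms hh] .
  define \<gamma> where "\<gamma> = map snd (h astar)"
  define I where "I = set \<gamma>"
  define P' where "P' = (\<lambda>b. map snd (h b) @ restr (P b) (UNIV - set (map snd (h b))))"
  define \<delta> where "\<delta> = map snd (drop (length (h astar)) (F2 astar))"
  define Pstar where "Pstar = \<delta> @ restr (P astar) (UNIV - set \<delta>)"
  have pP': "\<And>b. is_pref (P' b)" unfolding P'_def using pref_ext chain_distinct[OF ch] pP by blast
  have pPstar: "is_pref Pstar" unfolding Pstar_def \<delta>_def
    using pref_ext chain_distinct[OF chain_drop[OF c2]] pP by blast
  have ord: "is_ordering_of \<gamma> I" unfolding is_ordering_of_def I_def \<gamma>_def using chain_distinct[OF ch] by blast
  define \<Pi>1 where "\<Pi>1 = P'(astar := oplus_restr \<gamma> (P astar) I)"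
  define \<Pi>2 where "\<Pi>2 = P'(astar := oplus_restr \<gamma> Pstar I)"
  have \<Pi>1P: "\<Pi>1 = P'" unfolding \<Pi>1_def P'_def oplus_restr_def I_def \<gamma>_def by auto
  have pro1: "is_profile \<Pi>1" unfolding \<Pi>1P is_profile_def using pP' by blast
  have pro2: "is_profile \<Pi>2" unfolding \<Pi>2_def is_profile_def oplus_restr_def I_def
    using pP' pref_ext[OF chain_distinct[OF ch] pPstar, of astar] \<gamma>_def by auto
  have phi: "\<And>\<Pi>. is_profile \<Pi> \<Longrightarrow> \<phi> \<Pi> = outcome S (\<lambda>a. straightforward (\<Pi> a)) empty_hist"
    using assms(2) unfolding sequentializes_def by metis
  have gen: "straightforward (P' b) (take j (F b)) (fst (F b ! j)) = snd (F b ! j)"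
    if "chain (F b)" "take (length (h b)) (F b) = h b" "length (h b) \<le> length (F b)"
       "\<And>j. length (h b) \<le> j \<Longrightarrow> j < length (F b) \<Longrightarrow>
          snd (F b ! j) = straightforward (P b) (take j (F b)) (fst (F b ! j))"
       "j < length (F b)" for F b j
  proof -
    have "P' b = map snd (take (length (h b)) (F b)) @ restr (P b) (UNIV - set (map snd (take (length (h b)) (F b))))"
      unfolding P'_def that(2) ..
    then show ?thesis
      using sim_cond[OF that(1) that(3) refl, of "P b" j] that(4,5) by (simp add: straightforward_def)
  qed
  have r1: "final_hist S (\<lambda>a. straightforward (\<Pi>1 a)) empty_hist = F1"
  proof (rule reproduce[OF F1h(1,2)])
    fix b j assume j: "j < length (F1 b)"
    have "\<And>j. length (h b) \<le> j \<Longrightarrow> j < length (F1 b) \<Longrightarrow>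
          snd (F1 b ! j) = straightforward (P b) (take j (F1 b)) (fst (F1 b ! j))"
      using F1ch unfolding \<sigma>1_def by simp
    from gen[of F1 b, OF c1 F1pre(1) F1pre(2) this j]
    show "straightforward (\<Pi>1 b) (take j (F1 b)) (fst (F1 b ! j)) = snd (F1 b ! j)"
      unfolding \<Pi>1P .
  qed
  have r2: "final_hist S (\<lambda>a. straightforward (\<Pi>2 a)) empty_hist = F2"
  proof (rule reproduce[OF F2h(1,2)])
    fix b j assume j: "j < length (F2 b)"
    show "straightforward (\<Pi>2 b) (take j (F2 b)) (fst (F2 b ! j)) = snd (F2 b ! j)"
    proof (cases "b = astar")
      case False
      have "\<And>j. length (h b) \<le> j \<Longrightarrow> j < length (F2 b) \<Longrightarrow>
          snd (F2 b ! j) = straightforward (P b) (take j (F2 b)) (fst (F2 b ! j))"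
        using F2ch False unfolding \<sigma>2_def \<sigma>1_def by simp
      from gen[of F2 b, OF c2 F2pre(1) F2pre(2) this j]
      show ?thesis using False unfolding \<Pi>2_def by simp
    next
      case True
      let ?l = "F2 astar" and ?k = "length (h astar)"
      have e: "\<Pi>2 astar = map snd (take ?k ?l) @ restr Pstar (UNIV - set (map snd (take ?k ?l)))"
        unfolding \<Pi>2_def oplus_restr_def I_def \<gamma>_def F2pre by simp
      have hQ: "hd (filter (\<lambda>x. x \<in> fst (?l ! i)) Pstar) = snd (?l ! i)"
        if "?k \<le> i" "i < length ?l" for i
      proof -
        have "i - ?k < length (drop ?k ?l)" using that by simp
        from chain_hd[OF chain_drop[OF c2] this, of "restr (P astar) (UNIV - set \<delta>)"]
        show ?thesis using that unfolding Pstar_def \<delta>_def by simp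
      qed
      show ?thesis using sim_cond[OF c2 F2pre(2) refl hQ] j True e by simp
    qed
  qed
  have "outcome S \<sigma>1 h astar = \<phi> \<Pi>1 astar"
    unfolding phi[OF pro1] outcome_def r1 F1_def ..
  moreover have "outcome S \<sigma>2 h astar = \<phi> \<Pi>2 astar"
    unfolding phi[OF pro2] outcome_def r2 F2_def ..
  ultimately show ?thesis
    unfolding \<sigma>1_def \<sigma>2_def \<Pi>1_def \<Pi>2_def using ord pPstar pP' by blast
qed

end
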